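(* For any $F\in\mathscr{F}_1$, $i\in[F]$ and $s\in\mathcal{S}$, letting $f_i(s)=\gamma(s_1)\gamma(s_2)\cdots\gamma(s_\rho)$ be the $\gamma$-decomposition of $f_i(s)$: (i) $\mathcal{S}_{F,i}(\lambda)\ne\emptyset$ if and only if $f_i(s_1)=\gamma(s_1)=\lambda$; (ii) for any $r=1,\dots,\rho$, if $r\ge2$ or $|\mathcal{P}^2_{F,i}|=2$, then $|\gamma(s_r)|\ge2$; (iii) for any $r=2,\dots,\rho$, writing $\gamma(s_r)=g_1g_2\cdots g_l$, we have $g_1g_2\in\bar{\mathcal{P}}^2_{F,i}(f_i(s_{r-1}))$.
   Context: $\mathcal{S}$ is a finite source alphabet with $|\mathcal{S}|\ge 2$ and $\mathcal{C}=\{0,1\}$; $\mathcal{A}^k,\mathcal{A}^{\ast},\mathcal{A}^{+}$ are sequences of length $k$, finite, positive finite length; $\lambda$ empty sequence; $\preceq$ prefix, $\prec$ proper prefix; $\mathrm{suff}(x_1\cdots x_n)=x_2\cdots x_n$. A code-tuple $F$ with $m\ge1$ code tables consists of maps $f_i:\mathcal{S}\to\mathcal{C}^{\ast}$ and $\tau_i:\mathcal{S}\to\{0,\dots,m-1\}$, $i\in[F]=\{0,\dots,m-1\}$. $f_i^{\ast}(\lambda)=\lambda$, $f_i^{\ast}(\pmb{x})=f_i(x_1)f^{\ast}_{\tau_i(x_1)}(\mathrm{suff}(\pmb{x}))$. $\mathcal{S}_{F,i}(\pmb{b})=\{s:f_i(s)=\pmb{b}\}$. For integer $k\ge0$, $\pmb{b}\in\mathcal{C}^{\ast}$: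 $\mathcal{P}^k_{F,i}(\pmb{b})$ is the set of $\pmb{c}\in\mathcal{C}^k$ such that some $\pmb{x}=x_1\cdots x_n\in\mathcal{S}^{+}$ has $f_i^{\ast}(\pmb{x})\succeq\pmb{b}\pmb{c}$ and $f_i(x_1)\succeq\pmb{b}$; $\bar{\mathcal{P}}^k_{F,i}(\pmb{b})$ the same with $f_i(x_1)\succ\pmb{b}$; $\mathcal{P}^k_{F,i}=\mathcal{P}^k_{F,i}(\lambda)$. $F\in\mathscr{F}_{2\text{-}\mathrm{dec}}$ if $\mathcal{P}^2_{F,\tau_i(s)}\cap\bar{\mathcal{P}}^2_{F,i}(f_i(s))=\emptyset$ for all $i,s$, and $\mathcal{P}^2_{F,\tau_i(s)}\cap\mathcal{P}^2_{F,\tau_i(s')}=\emptyset$ whenever $s\ne s'$, $f_i(s)=f_i(s')$. Fix $\mu:\mathcal{S}\to(0,1]$ with $\sum_s\mu(s)=1$; $Q_{i,j}(F)=\sum_{s:\tau_i(s)=j}\mu(s)$; $F\in\mathscr{F}_{\mathrm{reg}}$ if $\pmb{\pi}Q(F)=\pmb{\pi}$, $\sum_i\pi_i=1$ has a unique solution. $\mathscr{F}_1=\{F\in\mathscr{F}_{\mathrm{reg}}\cap\mathscr{F}_{2\text{-}\mathrm{dec}}:\mathcal{P}^1_{F,i}=\{0,1\}\ \forall i\in[F]\}$. $\gamma$-decomposition: for $F\in\mathscr{F}_1$, $i\in[F]$, $s\in\mathcal{S}$, the symbols $s'$ with $f_i(s')\prec f_i(s)$ have pairwise distinct codewords; list them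 together with $s$ as $s_1,\dots,s_\rho$ with $s_\rho=s$ and $f_i(s_1)\prec f_i(s_2)\prec\cdots\prec f_i(s_\rho)$, and define $\gamma(s_1)=f_i(s_1)$ and $\gamma(s_r)\in\mathcal{C}^{\ast}$ by $f_i(s_r)=f_i(s_{r-1})\gamma(s_r)$ for $r\ge2$, so that $f_i(s)=\gamma(s_1)\cdots\gamma(s_\rho)$. *)

theory Defs
  imports Complex_Main "HOL-Library.Sublist"
begin

text \<open>A code-tuple F with m code tables is represented by the number m,
  the family of encoding maps f :: nat => 's => bool list (f i = f_i) and
  the transition maps tau :: nat => 's => nat (tau i = tau_i); only indices
  i < m are meaningful.  The code alphabet C = {0,1} is bool.\<close>

definition code_tuple :: "nat \<Rightarrow> (nat \<Rightarrow> 's \<Rightarrow> bool list) \<Rightarrow> (nat \<Rightarrow> 's \<Rightarrow> nat) \<Rightarrow> bool" where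
  "code_tuple m f tau \<longleftrightarrow> 1 \<le> m \<and> (\<forall>i<m. \<forall>s. tau i s < m)"

fun fstar :: "(nat \<Rightarrow> 's \<Rightarrow> bool list) \<Rightarrow> (nat \<Rightarrow> 's \<Rightarrow> nat) \<Rightarrow> nat \<Rightarrow> 's list \<Rightarrow> bool list" where
  "fstar f tau i [] = []"
| "fstar f tau i (x # xs) = f i x @ fstar f tau (tau i x) xs"

definition Ssym :: "(nat \<Rightarrow> 's \<Rightarrow> bool list) \<Rightarrow> nat \<Rightarrow> bool list \<Rightarrow> 's set" where
  "Ssym f i b = {s. f i s = b}"

definition Pset :: "nat \<Rightarrow> (nat \<Rightarrow> 's \<Rightarrow> bool list) \<Rightarrow> (nat \<Rightarrow> 's \<Rightarrow> nat) \<Rightarrow> nat \<Rightarrow> bool list \<Rightarrow> bool list set" where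
  "Pset k f tau i b = {c. length c = k \<and>
     (\<exists>x. x \<noteq> [] \<and> prefix (b @ c) (fstar f tau i x) \<and> prefix b (f i (hd x)))}"

definition Pbar :: "nat \<Rightarrow> (nat \<Rightarrow> 's \<Rightarrow> bool list) \<Rightarrow> (nat \<Rightarrow> 's \<Rightarrow> nat) \<Rightarrow> nat \<Rightarrow> bool list \<Rightarrow> bool list set" where
  "Pbar k f tau i b = {c. length c = k \<and>
     (\<exists>x. x \<noteq> [] \<and> prefix (b @ c) (fstar f tau i x) \<and> strict_prefix b (f i (hd x)))}"

definition two_dec :: "nat \<Rightarrow> (nat \<Rightarrow> 's \<Rightarrow> bool list) \<Rightarrow> (nat \<Rightarrow> 's \<Rightarrow> nat) \<Rightarrow> bool" where
  "two_dec m f tau \<longleftrightarrow>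
     (\<forall>i<m. \<forall>s. Pset 2 f tau (tau i s) [] \<inter> Pbar 2 f tau i (f i s) = {}) \<and>
     (\<forall>i<m. \<forall>s s'. s \<noteq> s' \<and> f i s = f i s' \<longrightarrow>
        Pset 2 f tau (tau i s) [] \<inter> Pset 2 f tau (tau i s') [] = {})"

definition Qmat :: "('s::finite \<Rightarrow> real) \<Rightarrow> (nat \<Rightarrow> 's \<Rightarrow> nat) \<Rightarrow> nat \<Rightarrow> nat \<Rightarrow> real" where
  "Qmat mu tau i j = (\<Sum>s\<in>{s. tau i s = j}. mu s)"

definition regular :: "('s::finite \<Rightarrow> real) \<Rightarrow> nat \<Rightarrow> (nat \<Rightarrow> 's \<Rightarrow> nat) \<Rightarrow> bool" where
  "regular mu m tau \<longleftrightarrow>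
     (\<exists>!pi :: nat \<Rightarrow> real. (\<forall>j\<ge>m. pi j = 0) \<and>
        (\<forall>j<m. (\<Sum>i<m. pi i * Qmat mu tau i j) = pi j) \<and> (\<Sum>i<m. pi i) = 1)"

definition F1 :: "('s::finite \<Rightarrow> real) \<Rightarrow> nat \<Rightarrow> (nat \<Rightarrow> 's \<Rightarrow> bool list) \<Rightarrow> (nat \<Rightarrow> 's \<Rightarrow> nat) \<Rightarrow> bool" where
  "F1 mu m f tau \<longleftrightarrow> code_tuple m f tau \<and> regular mu m tau \<and> two_dec m f tau \<and>
     (\<forall>i<m. Pset 1 f tau i [] = {[False], [True]})"

text \<open>gamma-decomposition: the list ss = [s_1, ..., s_rho] (0-indexed in Isabelle)
  of all symbols whose codeword is a proper prefix of f i s, together with s,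
  ordered by strictly increasing codewords, with last element s.\<close>
definition gamma_chain :: "(nat \<Rightarrow> 's \<Rightarrow> bool list) \<Rightarrow> nat \<Rightarrow> 's \<Rightarrow> 's list \<Rightarrow> bool" where
  "gamma_chain f i s ss \<longleftrightarrow> ss \<noteq> [] \<and> last ss = s \<and>
     set ss = {s'. strict_prefix (f i s') (f i s)} \<union> {s} \<and>
     sorted_wrt (\<lambda>a b. strict_prefix (f i a) (f i b)) ss"

text \<open>gamma f i ss r = gamma(s_(r+1)) in the paper's 1-based numbering.\<close>
definition gamma :: "(nat \<Rightarrow> 's \<Rightarrow> bool list) \<Rightarrow> nat \<Rightarrow> 's list \<Rightarrow> nat \<Rightarrow> bool list" where
  "gamma f i ss r = (if r = 0 then f i (ss ! 0)
                     else drop (length (f i (ss ! (r - 1)))) (f i (ss ! r)))"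

end

theory Submission
  imports Defs
begin

fun stt :: "(nat \<Rightarrow> 's \<Rightarrow> nat) \<Rightarrow> nat \<Rightarrow> 's list \<Rightarrow> nat" where
  "stt tau j [] = j"
| "stt tau j (a # x) = stt tau (tau j a) x"

lemma fstar_append: "fstar f tau j (x @ y) = fstar f tau j x @ fstar f tau (stt tau j x) y"
  by (induction x arbitrary: j) auto

lemma stt_lt: "code_tuple m f tau \<Longrightarrow> j < m \<Longrightarrow> stt tau j x < m"
  by (induction x arbitrary: j) (auto simp: code_tuple_def)

lemma P1_ex:
  assumes "F1 mu m f tau" "j < m"
  shows "\<exists>x. x \<noteq> [] \<and> prefix [d] (fstar f tau j x)"
proof -
  have "[d] \<in> Pset 1 f tau j []" using assms unfolding F1_def by (cases d) auto
  then show ?thesis unfolding Pset_def by auto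
qed

lemma long_ex:
  assumes "F1 mu m f tau" "j < m"
  shows "\<exists>y. n \<le> length (fstar f tau j y)"
proof (induction n)
  case 0 then show ?case by auto
next
  case (Suc n)
  then obtain y where y: "n \<le> length (fstar f tau j y)" by blast
  have ct: "code_tuple m f tau" using assms unfolding F1_def by auto
  have "stt tau j y < m" using stt_lt[OF ct assms(2)] .
  then obtain x where "x \<noteq> []" "prefix [True] (fstar f tau (stt tau j y) x)"
    using P1_ex[OF assms(1)] by blast
  then have "1 \<le> length (fstar f tau (stt tau j y) x)"
    using prefix_length_le by fastforce
  then have "Suc n \<le> length (fstar f tau j (y @ x))" using y by (simp add: fstar_append)
  then show ?case by blast
qed

lemma ext_ex:
  assumes "F1 mu m f tau" "j < m"
  shows "\<exists>x. x \<noteq> [] \<and> prefix [d] (fstar f tau j x) \<and> 2 \<le> length (fstar f tau j x)"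
proof -
  have ct: "code_tuple m f tau" using assms unfolding F1_def by auto
  obtain x where x: "x \<noteq> []" "prefix [d] (fstar f tau j x)" using P1_ex[OF assms] by blast
  obtain y where y: "2 \<le> length (fstar f tau (stt tau j x) y)"
    using long_ex[OF assms(1) stt_lt[OF ct assms(2)]] by blast
  have "prefix [d] (fstar f tau j (x @ y))" using x(2) by (simp add: fstar_append)
  moreover have "2 \<le> length (fstar f tau j (x @ y))" using y by (simp add: fstar_append)
  ultimately show ?thesis using x(1) by blast
qed

lemma P2_first:
  assumes "F1 mu m f tau" "j < m"
  shows "\<exists>e. [d, e] \<in> Pset 2 f tau j []"
proof -
  obtain x where x: "x \<noteq> []" "prefix [d] (fstar f tau j x)" "2 \<le> length (fstar f tau j x)"
    using ext_ex[OF assms] by blast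
  then obtain e w where w: "fstar f tau j x = d # e # w"
    by (cases "fstar f tau j x"; cases "tl (fstar f tau j x)") auto
  have "[d, e] \<in> Pset 2 f tau j []" unfolding Pset_def using x(1) w by auto
  then show ?thesis by blast
qed

lemma Pset_lift:
  assumes "w \<in> Pset 2 f tau (tau i t) []" "f i t = []"
  shows "w \<in> Pset 2 f tau i []"
proof -
  obtain x where x: "length w = 2" "x \<noteq> []" "prefix w (fstar f tau (tau i t) x)"
    using assms(1) unfolding Pset_def by auto
  have "fstar f tau i (t # x) = fstar f tau (tau i t) x" using assms(2) by simp
  then show ?thesis unfolding Pset_def using x by (auto intro!: exI[of _ "t # x"])
qed

lemma card3:
  assumes "a \<in> Pset 2 f tau i []" "b \<in> Pset 2 f tau i []" "c \<in> Pset 2 f tau i []"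
    "a \<noteq> b" "a \<noteq> c" "b \<noteq> c"
  shows "card (Pset 2 f tau i []) \<noteq> 2"
proof -
  have "Pset 2 f tau i [] \<subseteq> {xs :: bool list. length xs = 2}" unfolding Pset_def by auto
  then have fin: "finite (Pset 2 f tau i [])"
    using finite_lists_length_eq[of "UNIV :: bool set" 2] finite_subset by auto
  have "{a, b, c} \<subseteq> Pset 2 f tau i []" using assms by auto
  then have "card {a, b, c} \<le> card (Pset 2 f tau i [])" using fin card_mono by blast
  moreover have "card {a, b, c} = 3" using assms by auto
  ultimately show ?thesis by auto
qed

theorem lemma16:
  fixes mu :: "'s::finite \<Rightarrow> real"
    and m :: nat and f :: "nat \<Rightarrow> 's \<Rightarrow> bool list" and tau :: "nat \<Rightarrow> 's \<Rightarrow> nat"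
    and i :: nat and s :: 's and ss :: "'s list"
  assumes card_S: "card (UNIV :: 's set) \<ge> 2"
    and mu_pos: "\<And>x. 0 < mu x \<and> mu x \<le> 1"
    and mu_sum: "(\<Sum>x\<in>UNIV. mu x) = 1"
    and F: "F1 mu m f tau"
    and i: "i < m"
    and chain: "gamma_chain f i s ss"
  shows "(Ssym f i [] \<noteq> {} \<longleftrightarrow> (f i (ss ! 0) = [] \<and> gamma f i ss 0 = []))
    \<and> (\<forall>r<length ss. (r \<ge> 1 \<or> card (Pset 2 f tau i []) = 2) \<longrightarrow> length (gamma f i ss r) \<ge> 2)
    \<and> (\<forall>r. 1 \<le> r \<and> r < length ss \<longrightarrow>
          take 2 (gamma f i ss r) \<in> Pbar 2 f tau i (f i (ss ! (r - 1))))"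
proof -
  have ct: "code_tuple m f tau" using F unfolding F1_def by auto
  have td: "two_dec m f tau" using F unfolding F1_def by auto
  have td1: "Pset 2 f tau (tau j t) [] \<inter> Pbar 2 f tau j (f j t) = {}" if "j < m" for j t
    using td that unfolding two_dec_def by blast
  have td2: "Pset 2 f tau (tau j t) [] \<inter> Pset 2 f tau (tau j t') [] = {}"
    if "j < m" "t \<noteq> t'" "f j t = f j t'" for j t t'
    using td that unfolding two_dec_def by blast
  have tlt: "\<And>t. tau i t < m" using ct i unfolding code_tuple_def by auto
  have ne: "ss \<noteq> []" and lst: "last ss = s"
    and setss: "set ss = {s'. strict_prefix (f i s') (f i s)} \<union> {s}"
    and srt: "sorted_wrt (\<lambda>a b. strict_prefix (f i a) (f i b)) ss"
    using chain unfolding gamma_chain_def by auto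
  have srtn: "\<And>p q. p < q \<Longrightarrow> q < length ss \<Longrightarrow> strict_prefix (f i (ss ! p)) (f i (ss ! q))"
    using srt sorted_wrt_nth_less by blast
  have P1: "Ssym f i [] \<noteq> {} \<longleftrightarrow> (f i (ss ! 0) = [] \<and> gamma f i ss 0 = [])"
  proof
    assume "Ssym f i [] \<noteq> {}"
    then obtain t where t: "f i t = []" unfolding Ssym_def by auto
    have "f i (ss ! 0) = []"
    proof (cases "f i s = []")
      case True
      have "ss ! 0 \<in> set ss" using ne by simp
      then show ?thesis using setss True by auto
    next
      case False
      then have "t \<in> set ss" using setss t by (auto simp: strict_prefix_def)
      then obtain k where k: "k < length ss" "ss ! k = t" by (auto simp: in_set_conv_nth)
      show ?thesis
      proof (cases k)
        case 0 then show ?thesis using k t by simp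
      next
        case (Suc k')
        then have "strict_prefix (f i (ss ! 0)) (f i (ss ! k))" using srtn k by auto
        then show ?thesis using k t by simp
      qed
    qed
    then show "f i (ss ! 0) = [] \<and> gamma f i ss 0 = []" by (simp add: gamma_def)
  next
    assume "f i (ss ! 0) = [] \<and> gamma f i ss 0 = []"
    then show "Ssym f i [] \<noteq> {}" unfolding Ssym_def by auto
  qed
  have P2a: "length (gamma f i ss r) \<ge> 2" if r: "1 \<le> r" "r < length ss" for r
  proof (rule ccontr)
    assume "\<not> length (gamma f i ss r) \<ge> 2"
    define a where "a = ss ! (r - 1)"
    define t where "t = ss ! r"
    have sp: "strict_prefix (f i a) (f i t)" unfolding a_def t_def using srtn r by auto
    define g where "g = gamma f i ss r"
    have g: "f i t = f i a @ g" using sp r unfolding g_def gamma_def a_def t_def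
      by (auto simp: strict_prefix_def prefix_def)
    have "g \<noteq> []" using sp g by auto
    with \<open>\<not> length (gamma f i ss r) \<ge> 2\<close> obtain c where c: "g = [c]"
      unfolding g_def[symmetric] by (cases g; cases "tl g") auto
    obtain d where d: "[c, d] \<in> Pset 2 f tau (tau i a) []" using P2_first[OF F tlt] by blast
    obtain x where x: "x \<noteq> []" "prefix [d] (fstar f tau (tau i t) x)"
      using P1_ex[OF F tlt] by blast
    have "fstar f tau i (t # x) = f i a @ [c] @ fstar f tau (tau i t) x" using g c by simp
    then have "prefix (f i a @ [c, d]) (fstar f tau i (t # x))" using x(2)
      by (auto simp: prefix_def)
    then have "[c, d] \<in> Pbar 2 f tau i (f i a)" unfolding Pbar_def using sp
      by (auto intro!: exI[of _ "t # x"])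
    then show False using d td1[OF i, of a] by blast
  qed
  have P2b: "length (gamma f i ss 0) \<ge> 2" if cd: "card (Pset 2 f tau i []) = 2"
  proof (rule ccontr)
    assume "\<not> length (gamma f i ss 0) \<ge> 2"
    define a where "a = ss ! 0"
    then have len: "length (f i a) < 2" using \<open>\<not> length (gamma f i ss 0) \<ge> 2\<close>
      by (simp add: gamma_def)
    have lift: "[c, e] \<in> Pset 2 f tau i []" if "prefix [e] (fstar f tau (tau i a) x)" "f i a = [c]"
      for c e x
    proof -
      have "fstar f tau i (a # x) = [c] @ fstar f tau (tau i a) x" using that by simp
      then have "prefix [c, e] (fstar f tau i (a # x))" using that(1) by (auto simp: prefix_def)
      then show ?thesis unfolding Pset_def by (auto intro!: exI[of _ "a # x"])
    qed
    show False
    proof (cases "f i a")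
      case (Cons c w)
      then have fa: "f i a = [c]" using len by simp
      obtain x1 where x1: "prefix [True] (fstar f tau (tau i a) x1)" using P1_ex[OF F tlt] by blast
      obtain x2 where x2: "prefix [False] (fstar f tau (tau i a) x2)" using P1_ex[OF F tlt] by blast
      obtain e where e: "[\<not> c, e] \<in> Pset 2 f tau i []" using P2_first[OF F i] by blast
      show False using card3[OF lift[OF x1 fa] lift[OF x2 fa] e] cd by auto
    next
      case Nil
      obtain e1 where e1: "[True, e1] \<in> Pset 2 f tau (tau i a) []" using P2_first[OF F tlt] by blast
      obtain e2 where e2: "[False, e2] \<in> Pset 2 f tau (tau i a) []" using P2_first[OF F tlt] by blast
      have w: "\<exists>w. w \<in> Pset 2 f tau i [] \<and> w \<notin> Pset 2 f tau (tau i a) []"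
      proof (cases "\<exists>t. f i t \<noteq> []")
        case True
        then obtain t where t: "f i t \<noteq> []" by blast
        obtain x where x: "x \<noteq> []" "2 \<le> length (fstar f tau (tau i t) x)"
          using ext_ex[OF F tlt] by blast
        define w where "w = take 2 (fstar f tau i (t # x))"
        have l: "length w = 2" using x(2) unfolding w_def by simp
        have p: "prefix w (fstar f tau i (t # x))" unfolding w_def by (rule take_is_prefix)
        have "w \<in> Pset 2 f tau i []" unfolding Pset_def using l p by auto
        moreover have "w \<in> Pbar 2 f tau i []" unfolding Pbar_def using l p t
          by (auto intro!: exI[of _ "t # x"] simp: strict_prefix_def)
        then have "w \<notin> Pset 2 f tau (tau i a) []" using td1[OF i, of a] Nil by auto
        ultimately show ?thesis by blast
      next
        case False
        obtain t where t: "t \<noteq> a"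
        proof -
          have "\<not> (UNIV :: 's set) \<subseteq> {a}"
          proof
            assume "(UNIV :: 's set) \<subseteq> {a}"
            then have "card (UNIV :: 's set) \<le> card {a}" by (intro card_mono) auto
            then show False using card_S by simp
          qed
          then show ?thesis using that by blast
        qed
        obtain w where w: "w \<in> Pset 2 f tau (tau i t) []" using P2_first[OF F tlt] by blast
        have "w \<in> Pset 2 f tau i []" using Pset_lift[OF w] False by blast
        moreover have "w \<notin> Pset 2 f tau (tau i a) []" using td2[OF i t] Nil False w by auto
        ultimately show ?thesis by blast
      qed
      then obtain w where w: "w \<in> Pset 2 f tau i []" "w \<notin> Pset 2 f tau (tau i a) []" by blast
      have i1: "[True, e1] \<in> Pset 2 f tau i []" using Pset_lift[OF e1] Nil by blast
      have i2: "[False, e2] \<in> Pset 2 f tau i []" using Pset_lift[OF e2] Nil by blast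
      have "w \<noteq> [True, e1]" "w \<noteq> [False, e2]" using w e1 e2 by auto
      then show False using card3[OF i1 i2 w(1)] cd by auto
    qed
  qed
  have P3: "take 2 (gamma f i ss r) \<in> Pbar 2 f tau i (f i (ss ! (r - 1)))"
    if r: "1 \<le> r" "r < length ss" for r
  proof -
    define a where "a = ss ! (r - 1)"
    define t where "t = ss ! r"
    have sp: "strict_prefix (f i a) (f i t)" unfolding a_def t_def using srtn r by auto
    have g: "f i t = f i a @ gamma f i ss r" using sp r unfolding gamma_def a_def t_def
      by (auto simp: strict_prefix_def prefix_def)
    have l: "length (take 2 (gamma f i ss r)) = 2" using P2a[OF r] by simp
    have "prefix (f i a @ take 2 (gamma f i ss r)) (fstar f tau i [t])"
      using g by (simp add: take_is_prefix)
    then show ?thesis unfolding Pbar_def a_def[symmetric] using l sp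
      by (auto intro!: exI[of _ "[t]"])
  qed
  have "\<forall>r<length ss. (r \<ge> 1 \<or> card (Pset 2 f tau i []) = 2) \<longrightarrow> length (gamma f i ss r) \<ge> 2"
  proof (intro allI impI)
    fix r assume "r < length ss" "r \<ge> 1 \<or> card (Pset 2 f tau i []) = 2"
    then show "length (gamma f i ss r) \<ge> 2" using P2a P2b by (cases r) auto
  qed
  then show ?thesis using P1 P3 by blast
qed

end
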